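(* Let $L$ be a connected Lie group, $V$ a vector subgroup of $L$, and $P$ a one-parameter subgroup of $L$ normalizing $V$ such that the conjugation action of $P$ on $V$ is irreducible and nontrivial. Let $H=PV$, let $p\in P$ be nontrivial, and let $\sigma(p):V\to V$ be the conjugation action of $p$ on $V$. Then: (i) every one-parameter subgroup of $L$ contained in $H$ is either contained in $V$ or is of the form $wPw^{-1}$ for some $w\in V$; (ii) if $\sigma(p)$ is nontrivial, then for every $v\in V$ the element $pv$ is contained in a unique one-parameter subgroup contained in $H$; (iii) if $\sigma(p)$ is trivial, then for every $v\in V$ with $v\neq 0$, $pv$ is not contained in any one-parameter subgroup of $H$.
   Context: A vector subgroup is a subgroup topologically isomorphic to $\mathbb R^d$ for some $d\ge1$ (with the induced topology), regarded as a real vector space with additive notation ($0$ its identity). One-parameter subgroups are regarded as subgroups (images of continuous homomorphisms $\mathbb R\to L$). $H$ need not be closed; it is a Lie subgroup whose Lie algebra is the sum of those of $P$ and $V$. *)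

theory Defs
  imports "HOL-Analysis.Analysis" "HOL-Algebra.Coset"
begin

fun Ck_on :: "nat \<Rightarrow> 'a::euclidean_space set \<Rightarrow> ('a \<Rightarrow> 'b::real_normed_vector) \<Rightarrow> bool" where
  "Ck_on 0 S f = continuous_on S f"
| "Ck_on (Suc k) S f =
     ((\<forall>x\<in>S. f differentiable (at x)) \<and>
      (\<forall>i\<in>Basis. Ck_on k S (\<lambda>x. frechet_derivative f (at x) i)))"

definition smooth_on :: "'a::euclidean_space set \<Rightarrow> ('a \<Rightarrow> 'b::real_normed_vector) \<Rightarrow> bool" where
  "smooth_on S f \<longleftrightarrow> (\<forall>k. Ck_on k S f)"

definition is_chart :: "'g topology \<Rightarrow> 'g set \<Rightarrow> ('g \<Rightarrow> 'e::euclidean_space) \<Rightarrow> bool" where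
  "is_chart T U \<phi> \<longleftrightarrow> openin T U \<and> open (\<phi> ` U) \<and>
     homeomorphic_map (subtopology T U) (top_of_set (\<phi> ` U)) \<phi>"

definition smooth_atlas :: "'g topology \<Rightarrow> ('g set \<times> ('g \<Rightarrow> 'e::euclidean_space)) set \<Rightarrow> bool" where
  "smooth_atlas T A \<longleftrightarrow>
     (\<forall>(U, \<phi>)\<in>A. is_chart T U \<phi>) \<and>
     topspace T \<subseteq> (\<Union>(U, \<phi>)\<in>A. U) \<and>
     (\<forall>(U, \<phi>)\<in>A. \<forall>(W, \<psi>)\<in>A. smooth_on (\<phi> ` (U \<inter> W)) (\<psi> \<circ> inv_into U \<phi>))"

definition prod_atlas ::
  "('g set \<times> ('g \<Rightarrow> 'e)) set \<Rightarrow> ('h set \<times> ('h \<Rightarrow> 'f)) set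
     \<Rightarrow> (('g \<times> 'h) set \<times> ('g \<times> 'h \<Rightarrow> 'e \<times> 'f)) set" where
  "prod_atlas A B = {(U \<times> W, \<lambda>(x, y). (\<phi> x, \<psi> y)) | U \<phi> W \<psi>. (U, \<phi>) \<in> A \<and> (W, \<psi>) \<in> B}"

definition smooth_map ::
  "'g topology \<Rightarrow> ('g set \<times> ('g \<Rightarrow> 'e::euclidean_space)) set \<Rightarrow>
   'h topology \<Rightarrow> ('h set \<times> ('h \<Rightarrow> 'f::euclidean_space)) set \<Rightarrow> ('g \<Rightarrow> 'h) \<Rightarrow> bool" where
  "smooth_map T A S B F \<longleftrightarrow> continuous_map T S F \<and>
     (\<forall>(U, \<phi>)\<in>A. \<forall>(W, \<psi>)\<in>B. smooth_on (\<phi> ` (U \<inter> F -` W)) (\<psi> \<circ> F \<circ> inv_into U \<phi>))"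

definition lie_group ::
  "('g, 'b) monoid_scheme \<Rightarrow> 'g topology \<Rightarrow> ('g set \<times> ('g \<Rightarrow> 'e::euclidean_space)) set \<Rightarrow> bool" where
  "lie_group G T A \<longleftrightarrow> group G \<and> topspace T = carrier G \<and> Hausdorff_space T \<and>
     smooth_atlas T A \<and>
     smooth_map (prod_topology T T) (prod_atlas A A) T A (\<lambda>(x, y). x \<otimes>\<^bsub>G\<^esub> y) \<and>
     smooth_map T A T A (\<lambda>x. inv\<^bsub>G\<^esub> x)"

definition one_param_subgroup :: "('g, 'b) monoid_scheme \<Rightarrow> 'g topology \<Rightarrow> 'g set \<Rightarrow> bool" where
  "one_param_subgroup G T Q \<longleftrightarrow>
     (\<exists>c. continuous_map euclideanreal T c \<and> (\<forall>s t. c (s + t) = c s \<otimes>\<^bsub>G\<^esub> c t) \<and> Q = range c)"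

text \<open>f is a topological group isomorphism from R^d (a Euclidean space 'v) onto the subgroup V
  (with the induced topology); V is then a vector subgroup, with vector structure transported by f.\<close>
definition vector_subgroup_param ::
  "('g, 'b) monoid_scheme \<Rightarrow> 'g topology \<Rightarrow> 'g set \<Rightarrow> ('v::euclidean_space \<Rightarrow> 'g) \<Rightarrow> bool" where
  "vector_subgroup_param G T V f \<longleftrightarrow> subgroup V G \<and> f ` UNIV = V \<and>
     (\<forall>x y. f (x + y) = f x \<otimes>\<^bsub>G\<^esub> f y) \<and>
     homeomorphic_map euclidean (subtopology T V) f"

end

theory Submission
  imports Defs
begin


lemma cauchy_linear:
  fixes g :: "'a::real_normed_vector \<Rightarrow> 'b::real_normed_vector"
  assumes add: "\<And>x y. g (x + y) = g x + g y" and cont: "continuous_on UNIV g"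
  shows "linear g"
proof (rule linearI)
  show "g (x + y) = g x + g y" for x y by (rule add)
  fix r :: real and x :: 'a
  define h where "h r = g (r *\<^sub>R x) - r *\<^sub>R g x" for r
  have hadd: "h (r + s) = h r + h s" for r s
    unfolding h_def by (simp add: scaleR_add_left add algebra_simps)
  have h0: "h 0 = 0" using hadd[of 0 0] by simp
  have hneg: "h (- r) = - h r" for r proof -
    have "h r + h (-r) = 0" using hadd[of r "-r"] h0 by simp
    then show ?thesis by (metis add_diff_cancel_left' diff_0)
  qed
  have hnat: "h (of_nat n * r) = of_nat n *\<^sub>R h r" for n r
  proof (induction n)
    case 0 show ?case using h0 by simp
  next
    case (Suc n)
    have "h (of_nat (Suc n) * r) = h (of_nat n * r + r)" by (simp add: algebra_simps)
    also have "\<dots> = h (of_nat n * r) + h r" by (rule hadd)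
    also have "\<dots> = of_nat (Suc n) *\<^sub>R h r" using Suc.IH by (simp add: algebra_simps)
    finally show ?case .
  qed
  have h1: "h 1 = 0" unfolding h_def by simp
  have hint: "h (of_int m) = 0" for m
  proof (cases "m \<ge> 0")
    case True then obtain n where "m = int n" by (rule nonneg_int_cases)
    then show ?thesis using hnat[of n 1] h1 by simp
  next
    case False then have "- m \<ge> 0" by simp
    then obtain n where "- m = int n" by (rule nonneg_int_cases)
    then have "m = - int n" by simp
    then show ?thesis using hnat[of n 1] h1 hneg[of "of_nat n"] by simp
  qed
  have hQ: "h q = 0" if "q \<in> \<rat>" for q
  proof -
    obtain m b where q0: "q = of_int m / of_int b" and b: "b > 0" and "coprime m b"
      using \<open>q \<in> \<rat>\<close> by (rule Rats_cases')
    define n where "n = nat b"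
    have n: "n > 0" using b n_def by simp
    have q: "q = of_int m / of_nat n" using q0 b n_def by simp
    have "of_nat n *\<^sub>R h q = h (of_nat n * q)" by (simp add: hnat)
    also have "of_nat n * q = of_int m" using n q by simp
    finally have "of_nat n *\<^sub>R h q = 0" using hint by simp
    then show ?thesis using n by simp
  qed
  have hc: "continuous_on (closure \<rat>) h"
  proof -
    have "continuous_on UNIV (\<lambda>r. g (r *\<^sub>R x))"
      by (rule continuous_on_compose2[OF cont]) (auto intro: continuous_intros)
    then have "continuous_on UNIV (\<lambda>r. g (r *\<^sub>R x) - r *\<^sub>R g x)"
      by (intro continuous_intros)
    moreover have "h = (\<lambda>r. g (r *\<^sub>R x) - r *\<^sub>R g x)" by (rule ext) (simp add: h_def)
    ultimately show ?thesis using continuous_on_subset by blast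
  qed
  have "h r = 0" using continuous_constant_on_closure[OF hc hQ] Rats_closure_real by auto
  then show "g (r *\<^sub>R x) = r *\<^sub>R g x" unfolding h_def by simp
qed

locale LS = group G for G (structure) +
  fixes T :: "'g topology" and V :: "'g set" and f :: "'v::euclidean_space \<Rightarrow> 'g" and c :: "real \<Rightarrow> 'g"
  assumes top: "topspace T = carrier G" and haus: "Hausdorff_space T"
  and cmul: "continuous_map (prod_topology T T) T (\<lambda>(x,y). x \<otimes> y)"
  and cinv: "continuous_map T T (\<lambda>x. inv x)"
  and vec: "vector_subgroup_param G T V f"
  and cc: "continuous_map euclideanreal T c" and chom: "\<And>s t. c (s+t) = c s \<otimes> c t"
  and nrm: "\<forall>q\<in>range c. \<forall>v\<in>V. q \<otimes> v \<otimes> inv q \<in> V"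
  and irr: "\<forall>S. subspace S \<and> (\<forall>q\<in>range c. \<forall>x\<in>S. inv_into UNIV f (q \<otimes> f x \<otimes> inv q) \<in> S)
                        \<longrightarrow> S = {0} \<or> S = UNIV"
  and ntriv: "\<exists>q\<in>range c. \<exists>v\<in>V. q \<otimes> v \<otimes> inv q \<noteq> v"
begin

lemma c_carr[simp]: "c s \<in> carrier G"
  using cc top by (metis continuous_map_def Pi_iff topspace_euclidean UNIV_I)

lemma c0[simp]: "c 0 = \<one>"
  using chom[of 0 0] by simp

lemma c_neg: "c (-s) = inv (c s)"
  using chom[of "-s" s] by (metis add.left_inverse c0 c_carr inv_equality)

lemma c_comm: "c s \<otimes> c t = c t \<otimes> c s"
  by (metis add.commute chom)

lemma Vsub: "subgroup V G" and fV: "f x \<in> V" and f_add: "f (x + y) = f x \<otimes> f y"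
  and fhomeo: "homeomorphic_map euclidean (subtopology T V) f"
  using vec unfolding vector_subgroup_param_def by auto

lemma Vcarr: "V \<subseteq> carrier G" using Vsub subgroup.subset by blast

lemma f_carr[simp]: "f x \<in> carrier G" using fV Vcarr by blast

lemma f0[simp]: "f 0 = \<one>"
  using f_add[of 0 0] by simp

lemma f_neg: "f (-x) = inv (f x)"
  using f_add[of "-x" x] by (metis add.left_inverse f0 f_carr inv_equality)

lemma f_inj: "inj f"
  using fhomeo homeomorphic_imp_injective_map by fastforce

lemma f_surj: "f ` UNIV = V" using vec unfolding vector_subgroup_param_def by auto

definition finv where "finv = inv_into UNIV f"

lemma finv_f[simp]: "finv (f x) = x" using f_inj by (simp add: finv_def)
lemma f_finv: "y \<in> V \<Longrightarrow> f (finv y) = y" using f_surj by (simp add: finv_def f_inv_into_f)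

lemma finv_cont: "continuous_map (subtopology T V) euclidean finv"
proof -
  obtain g where g: "homeomorphic_maps euclidean (subtopology T V) f g"
    using fhomeo homeomorphic_map_maps by blast
  have cg: "continuous_map (subtopology T V) euclidean g" using g homeomorphic_maps_def by blast
  have "topspace (subtopology T V) = V" using Vcarr top by auto
  moreover have "\<And>y. y \<in> V \<Longrightarrow> g y = finv y"
    using g f_finv unfolding homeomorphic_maps_def by (metis topspace_euclidean UNIV_I)
  ultimately show ?thesis using continuous_map_eq[OF cg] by metis
qed


lemma inv_cancel: "g \<in> carrier G \<Longrightarrow> z \<in> carrier G \<Longrightarrow> inv g \<otimes> (g \<otimes> z) = z"
  by (simp add: m_assoc[symmetric])

lemma conj_mult: "g \<in> carrier G \<Longrightarrow> x \<in> carrier G \<Longrightarrow> y \<in> carrier G \<Longrightarrow>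
   g \<otimes> (x \<otimes> y) \<otimes> inv g = (g \<otimes> x \<otimes> inv g) \<otimes> (g \<otimes> y \<otimes> inv g)"
  by (simp add: m_assoc inv_cancel)

lemma cmul2: "continuous_map X T g1 \<Longrightarrow> continuous_map X T g2 \<Longrightarrow> continuous_map X T (\<lambda>x. g1 x \<otimes> g2 x)"
  using continuous_map_compose[OF continuous_map_pairedI cmul] by (simp add: o_def)

lemma f_cont: "continuous_map euclidean T f"
  using fhomeo homeomorphic_imp_continuous_map continuous_map_into_fulltopology by blast

lemma const_cont: "z \<in> carrier G \<Longrightarrow> continuous_map X T (\<lambda>_. z)"
  using top by simp

definition a where "a s x = finv (c s \<otimes> f x \<otimes> inv (c s))"

lemma conjV: "c s \<otimes> f x \<otimes> inv (c s) \<in> V" using nrm fV by blast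

lemma f_a: "f (a s x) = c s \<otimes> f x \<otimes> inv (c s)"
  unfolding a_def using conjV f_finv by blast

lemma f_eq: "f x = f y \<longleftrightarrow> x = y" using f_inj by (meson injD)

lemma a_add: "a s (x + y) = a s x + a s y"
  by (metis conj_mult c_carr f_carr f_a f_add f_eq)

lemma a_comp: "a s (a t x) = a (s + t) x"
proof -
  have "f (a s (a t x)) = c s \<otimes> (c t \<otimes> f x \<otimes> inv (c t)) \<otimes> inv (c s)" by (simp add: f_a)
  also have "\<dots> = c (s+t) \<otimes> f x \<otimes> inv (c (s + t))" by (simp add: chom m_assoc inv_mult_group)
  also have "\<dots> = f (a (s+t) x)" by (simp add: f_a)
  finally show ?thesis by (simp add: f_eq)
qed

lemma a0[simp]: "a 0 x = x" by (metis c0 f_a f_carr inv_one l_one r_one f_eq)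

lemma a_cont: "continuous_on UNIV (a s)"
proof -
  have "continuous_map euclidean T (\<lambda>x. c s \<otimes> f x \<otimes> inv (c s))"
    by (intro cmul2 const_cont f_cont) auto
  then have "continuous_map euclidean (subtopology T V) (\<lambda>x. c s \<otimes> f x \<otimes> inv (c s))"
    using conjV by (simp add: continuous_map_into_subtopology)
  from continuous_map_compose[OF this finv_cont]
  have "continuous_map euclidean euclidean (a s)" by (simp add: o_def a_def[abs_def])
  then show ?thesis by (simp add: continuous_map_iff_continuous2)
qed

lemma a_lin: "linear (a s)" by (rule cauchy_linear[of "a s", OF a_add a_cont])


lemma a_commute: "a s (a t x) = a t (a s x)"
  by (simp add: a_comp add.commute)

lemma a_neg: "a (-s) (a s x) = x"
  by (simp add: a_comp)

lemma a_neg2: "a s (a (-s) x) = x"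
  by (simp add: a_comp)

lemma irr': "subspace S \<Longrightarrow> (\<And>s x. x \<in> S \<Longrightarrow> a s x \<in> S) \<Longrightarrow> S = {0} \<or> S = UNIV"
  using irr unfolding a_def finv_def by blast

lemma K1: "(\<forall>x. a s0 x = x) \<or> (\<forall>x. a s0 x = x \<longrightarrow> x = 0)"
proof -
  let ?S = "{x. a s0 x = x}"
  have lin: "linear (a s0)" by (rule a_lin)
  have "subspace ?S"
    unfolding subspace_def using linear_0[OF lin] linear_add[OF lin] linear_scale[OF lin] by auto
  moreover have "a s x \<in> ?S" if "x \<in> ?S" for s x
    using that a_commute[of s0 s x] by simp
  ultimately have "?S = {0} \<or> ?S = UNIV" by (rule irr')
  then show ?thesis by auto
qed

lemma ntriv': "\<exists>s0 x. a s0 x \<noteq> x"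
proof -
  obtain s v where v: "v \<in> V" and ne: "c s \<otimes> v \<otimes> inv (c s) \<noteq> v" using ntriv by blast
  then have "f (a s (finv v)) \<noteq> f (finv v)" using f_a f_finv by simp
  then show ?thesis by metis
qed

lemma f_diff: "f (x - y) = f x \<otimes> inv (f y)"
  using f_add[of x "-y"] f_neg[of y] by simp

lemma PV: "c r \<in> V \<Longrightarrow> c r = \<one>"
proof -
  assume cr: "c r \<in> V"
  define x0 where "x0 = finv (c r)"
  have fx0: "f x0 = c r" using cr f_finv x0_def by simp
  have hfix: "a s x0 = x0" for s
  proof -
    have "f (a s x0) = c s \<otimes> c r \<otimes> inv (c s)" by (simp add: f_a fx0)
    also have "\<dots> = c r \<otimes> c s \<otimes> inv (c s)" by (simp add: c_comm[of s r])
    also have "\<dots> = c r" by (simp add: m_assoc)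
    finally show ?thesis using fx0 f_eq by metis
  qed
  have "x0 = 0"
  proof (rule ccontr)
    assume "x0 \<noteq> 0"
    then have "\<forall>x. a s x = x" for s using K1[of s] hfix[of s] by blast
    then show False using ntriv' by blast
  qed
  then show ?thesis using fx0 by simp
qed

lemma conjP: "f w \<otimes> c r \<otimes> inv (f w) = c r \<otimes> f (a (-r) w - w)"
proof -
  have "c r \<otimes> f (a (-r) w - w) = c r \<otimes> (inv (c r) \<otimes> f w \<otimes> inv (inv (c r))) \<otimes> inv (f w)"
    by (simp add: f_diff f_a c_neg m_assoc)
  also have "\<dots> = f w \<otimes> c r \<otimes> inv (f w)"
    by (simp add: m_assoc inv_cancel[symmetric] del: inv_cancel) (simp add: m_assoc[symmetric])
  finally show ?thesis by simp
qed

lemma decomp: "c s \<otimes> f x = c s' \<otimes> f x' \<Longrightarrow> c s = c s' \<and> x = x'"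
proof -
  assume eq: "c s \<otimes> f x = c s' \<otimes> f x'"
  have "c (s - s') = inv (c s') \<otimes> c s" using chom[of "-s'" s] c_neg by simp
  also have "\<dots> = f x' \<otimes> inv (f x)"
  proof -
    have "inv (c s') \<otimes> (c s \<otimes> f x) \<otimes> inv (f x) = inv (c s') \<otimes> (c s' \<otimes> f x') \<otimes> inv (f x)"
      using eq by simp
    then show ?thesis by (simp add: m_assoc inv_cancel)
  qed
  also have "\<dots> = f (x' - x)" by (simp add: f_diff)
  finally have "c (s - s') \<in> V" using fV by simp
  then have one: "c (s - s') = \<one>" by (rule PV)
  have cs: "c s = c s'" using chom[of s' "s - s'"] one by simp
  then have "f x = f x'" using eq by simp
  then show ?thesis using cs f_eq by blast
qed


lemma c_nat: "c p = \<one> \<Longrightarrow> c (of_nat n * p) = \<one>"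
proof (induction n)
  case 0 then show ?case by simp
next
  case (Suc n)
  have "c (of_nat (Suc n) * p) = c (of_nat n * p + p)" by (simp add: algebra_simps)
  also have "\<dots> = \<one>" using Suc by (simp add: chom)
  finally show ?case .
qed

lemma c_int: "c p = \<one> \<Longrightarrow> c (of_int n * p) = \<one>"
proof (cases "n \<ge> 0")
  case True
  assume cp: "c p = \<one>"
  obtain m where "n = int m" using True by (rule nonneg_int_cases)
  then show ?thesis using c_nat[OF cp, of m] by simp
next
  case False
  assume cp: "c p = \<one>"
  then have "- n \<ge> 0" using False by simp
  then obtain m where m: "- n = int m" by (rule nonneg_int_cases)
  then have "of_int n * p = - (of_nat m * p)" by (metis minus_minus mult_minus_left of_int_minus of_int_of_nat_eq)
  then show ?thesis using c_nat[OF cp, of m] c_neg by simp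
qed

lemma Pi_closed: "closed {s. c s = \<one>}"
proof -
  have "closedin T {\<one>}"
    using closedin_t1_singleton[OF Hausdorff_imp_t1_space[OF haus]] top by simp
  from closedin_continuous_map_preimage[OF cc this]
  show ?thesis by simp
qed

lemma disc: "\<exists>\<delta>>0. \<forall>s. c s = \<one> \<and> \<bar>s\<bar> < \<delta> \<longrightarrow> s = 0"
proof (rule ccontr)
  assume "\<not> ?thesis"
  then have H: "\<exists>p. c p = \<one> \<and> \<bar>p\<bar> < e \<and> p \<noteq> 0" if "e > 0" for e using that by blast
  have all: "c t = \<one>" for t
  proof -
    have "\<exists>y\<in>{s. c s = \<one>}. dist y t < e" if "e > 0" for e
    proof -
      obtain p where p: "c p = \<one>" "\<bar>p\<bar> < e" "p \<noteq> 0" using H[OF \<open>e > 0\<close>] by blast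
      define n where "n = floor (t / p)"
      define z where "z = t / p - of_int n"
      have z: "0 \<le> z" "z < 1" unfolding z_def n_def by linarith+
      have "t - of_int n * p = p * z" unfolding z_def using p(3) by (simp add: algebra_simps)
      then have "\<bar>t - of_int n * p\<bar> = \<bar>p\<bar> * z" using z by (simp add: abs_mult)
      also have "\<dots> < e" using z p(2) p(3)
        by (metis abs_ge_zero dual_order.strict_trans2 mult.right_neutral mult_left_mono less_eq_real_def mult_strict_left_mono zero_less_abs_iff)
      finally have "dist (of_int n * p) t < e" by (simp add: dist_real_def abs_minus_commute)
      moreover have "c (of_int n * p) = \<one>" by (rule c_int[OF p(1)])
      ultimately show ?thesis by blast
    qed
    then show ?thesis using closed_approachable[OF Pi_closed] by blast
  qed
  have "a s x = x" for s x
  proof -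
    have "f (a s x) = f x" by (simp add: f_a all)
    then show ?thesis by (simp add: f_eq)
  qed
  then show False using ntriv' by blast
qed

end


lemma local_cauchy:
  fixes \<tau> :: "real \<Rightarrow> real"
  assumes r: "r > 0"
    and add: "\<And>h k. \<bar>h\<bar> < r \<Longrightarrow> \<bar>k\<bar> < r \<Longrightarrow> \<tau> (h + k) = \<tau> h + \<tau> k"
    and cont: "continuous_on (ball 0 r) \<tau>"
  shows "\<exists>\<Gamma>. (\<forall>x y. \<Gamma> (x + y) = \<Gamma> x + \<Gamma> y) \<and> continuous_on UNIV \<Gamma> \<and>
              (\<forall>t. \<exists>N::nat. N > 0 \<and> \<bar>t / real N\<bar> < r \<and> \<Gamma> t = real N * \<tau> (t / real N))"
proof -
  have t0: "\<tau> 0 = 0" using add[of 0 0] r by simp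
  have tn: "\<tau> (real n * y) = real n * \<tau> y" if "\<bar>real n * y\<bar> < r" for n y
    using that
  proof (induction n)
    case 0 then show ?case using t0 by simp
  next
    case (Suc n)
    have a1: "\<bar>real n * y\<bar> < r"
    proof -
      have "\<bar>real n * y\<bar> \<le> \<bar>real (Suc n) * y\<bar>" by (simp add: abs_mult mult_right_mono)
      then show ?thesis using Suc.prems by linarith
    qed
    have a2: "\<bar>y\<bar> < r"
    proof -
      have "1 * \<bar>y\<bar> \<le> real (Suc n) * \<bar>y\<bar>" by (rule mult_right_mono) simp_all
      then have "\<bar>y\<bar> \<le> \<bar>real (Suc n) * y\<bar>" by (simp add: abs_mult)
      then show ?thesis using Suc.prems by linarith
    qed
    have "\<tau> (real (Suc n) * y) = \<tau> (real n * y + y)" by (simp add: algebra_simps)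
    also have "\<dots> = \<tau> (real n * y) + \<tau> y" using add[OF a1 a2] .
    also have "\<dots> = real (Suc n) * \<tau> y" using Suc.IH[OF a1] by (simp add: algebra_simps)
    finally show ?case .
  qed
  define Nf where "Nf t = nat (ceiling (\<bar>t\<bar> / r)) + 1" for t
  have Nbound: "\<bar>t\<bar> / r < real N \<Longrightarrow> \<bar>t / real N\<bar> < r" if "N > 0" for t N
  proof -
    assume "\<bar>t\<bar> / r < real N"
    then have "\<bar>t\<bar> < real N * r" using r by (simp add: pos_divide_less_eq)
    then show ?thesis using that by (simp add: abs_divide pos_divide_less_eq mult.commute)
  qed
  have Nb2: "\<bar>t / real N\<bar> < r" if "N > 0" "\<bar>t\<bar> \<le> B" "B / r < real N" for t B N
  proof -
    have "\<bar>t\<bar> / r \<le> B / r" using that r by (simp add: divide_right_mono)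
    then have "\<bar>t\<bar> / r < real N" using that by linarith
    then show ?thesis by (rule Nbound[OF that(1)])
  qed
  have Nf: "Nf t > 0" "\<bar>t\<bar> / r < real (Nf t)" for t
    unfolding Nf_def by (auto intro: le_less_trans[OF real_nat_ceiling_ge])
  define \<Gamma> where "\<Gamma> t = real (Nf t) * \<tau> (t / real (Nf t))" for t
  have key: "real N * \<tau> (t / real N) = \<Gamma> t" if N: "N > 0" "\<bar>t / real N\<bar> < r" for N t
  proof -
    define M where "M = Nf t"
    have M: "M > 0" "\<bar>t / real M\<bar> < r" using Nf Nbound M_def by auto
    have e1: "\<tau> (t / real N) = real M * \<tau> (t / (real N * real M))"
    proof -
      have "t / real N = real M * (t / (real N * real M))" using M N by (simp add: field_simps)
      then show ?thesis using tn[of M "t / (real N * real M)"] N by simp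
    qed
    have e2: "\<tau> (t / real M) = real N * \<tau> (t / (real N * real M))"
    proof -
      have "t / real M = real N * (t / (real N * real M))" using M N by (simp add: field_simps)
      then show ?thesis using tn[of N "t / (real N * real M)"] M by simp
    qed
    show ?thesis unfolding \<Gamma>_def M_def[symmetric] using e1 e2 by simp
  qed
  have addG: "\<Gamma> (x + y) = \<Gamma> x + \<Gamma> y" for x y
  proof -
    define N where "N = Nf (\<bar>x\<bar> + \<bar>y\<bar>)"
    have N: "N > 0" "(\<bar>x\<bar> + \<bar>y\<bar>) / r < real N" using Nf[of "\<bar>x\<bar> + \<bar>y\<bar>"] N_def by auto
    have bx: "\<bar>x / real N\<bar> < r" by (rule Nb2[OF N(1) _ N(2)]) simp
    have by': "\<bar>y / real N\<bar> < r" by (rule Nb2[OF N(1) _ N(2)]) simp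
    have bxy: "\<bar>(x + y) / real N\<bar> < r" by (rule Nb2[OF N(1) _ N(2)]) (rule abs_triangle_ineq)
    have "\<Gamma> (x + y) = real N * \<tau> ((x + y) / real N)" using key[OF N(1) bxy] by simp
    also have "\<dots> = real N * \<tau> (x / real N) + real N * \<tau> (y / real N)"
      using add[OF bx by'] by (simp add: add_divide_distrib distrib_left)
    also have "\<dots> = \<Gamma> x + \<Gamma> y" using key[OF N(1) bx] key[OF N(1) by'] by simp
    finally show ?thesis .
  qed
  have contG: "continuous_on UNIV \<Gamma>"
  proof (rule continuous_at_imp_continuous_on, intro ballI)
    fix t0 :: real
    define N where "N = Nf (\<bar>t0\<bar> + 1)"
    have N: "N > 0" "(\<bar>t0\<bar> + 1) / r < real N" using Nf[of "\<bar>t0\<bar> + 1"] N_def by auto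
    have bt: "\<bar>t / real N\<bar> < r" if "t \<in> ball t0 1" for t
    proof -
      have "\<bar>t\<bar> \<le> \<bar>t0\<bar> + 1" using that by (auto simp: dist_real_def)
      then show ?thesis by (rule Nb2[OF N(1) _ N(2)])
    qed
    have c1: "continuous_on (ball t0 1) (\<lambda>t. real N * \<tau> (t / real N))"
    proof -
      have "continuous_on (ball t0 1) (\<lambda>t. t / real N)" using N(1) by (intro continuous_intros) auto
      moreover have "(\<lambda>t. t / real N) ` ball t0 1 \<subseteq> ball 0 r" using bt by auto
      ultimately have "continuous_on (ball t0 1) (\<lambda>t. \<tau> (t / real N))"
        using continuous_on_compose2[OF cont] by blast
      then show ?thesis by (intro continuous_intros)
    qed
    have "continuous_on (ball t0 1) \<Gamma>"
      using continuous_on_eq[OF c1] key[OF N(1) bt] by metis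
    then show "isCont \<Gamma> t0" using continuous_on_eq_continuous_at[OF open_ball, of t0 1 \<Gamma>] by simp
  qed
  have "\<forall>t. \<exists>N::nat. N > 0 \<and> \<bar>t / real N\<bar> < r \<and> \<Gamma> t = real N * \<tau> (t / real N)"
    using Nf Nbound \<Gamma>_def by blast
  then show ?thesis using addG contG by blast
qed

context LS begin

lemma inv_cancel2: "g \<in> carrier G \<Longrightarrow> z \<in> carrier G \<Longrightarrow> g \<otimes> (inv g \<otimes> z) = z"
  by (simp add: m_assoc[symmetric])

lemma prod_decomp: "(c s \<otimes> f x) \<otimes> (c s' \<otimes> f x') = c (s + s') \<otimes> f (a (-s') x + x')"
proof -
  have "c (s + s') \<otimes> f (a (-s') x + x') = c s \<otimes> (c s' \<otimes> (inv (c s') \<otimes> (f x \<otimes> (c s' \<otimes> f x'))))"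
    by (simp add: chom f_add f_a c_neg m_assoc)
  also have "\<dots> = (c s \<otimes> f x) \<otimes> (c s' \<otimes> f x')" by (simp add: inv_cancel2 m_assoc)
  finally show ?thesis by simp
qed

lemma inv_decomp: "inv (c s \<otimes> f x) = c (-s) \<otimes> f (a s (-x))"
proof -
  have "c (-s) \<otimes> f (a s (-x)) = inv (c s) \<otimes> (c s \<otimes> (inv (f x) \<otimes> inv (c s)))"
    by (simp add: f_a f_neg c_neg m_assoc)
  also have "\<dots> = inv (f x) \<otimes> inv (c s)" by (simp add: inv_cancel)
  also have "\<dots> = inv (c s \<otimes> f x)" by (simp add: inv_mult_group)
  finally show ?thesis by simp
qed

lemma c_eq_diff: "c s = c s' \<Longrightarrow> c (s - s') = \<one>"
  using chom[of s "-s'"] c_neg[of s'] by simp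

lemma M_nat:
  assumes gh: "\<And>s t. \<gamma> (s + t) = \<gamma> s \<otimes> \<gamma> t" and y: "\<gamma> y = c s \<otimes> f x"
    and gcar: "\<And>t. \<gamma> t \<in> carrier G"
  shows "\<exists>x'. \<gamma> (of_nat n * y) = c (of_nat n * s) \<otimes> f x'"
proof (induction n)
  case 0
  have "\<gamma> 0 \<otimes> \<gamma> 0 = \<gamma> 0" using gh[of 0 0] by simp
  then have "\<gamma> 0 = \<one>" using gcar[of 0] by simp
  then show ?case by (intro exI[of _ 0]) simp
next
  case (Suc n)
  then obtain x' where x': "\<gamma> (of_nat n * y) = c (of_nat n * s) \<otimes> f x'" by blast
  have "\<gamma> (of_nat (Suc n) * y) = \<gamma> (of_nat n * y + y)" by (simp add: algebra_simps)
  also have "\<dots> = (c (of_nat n * s) \<otimes> f x') \<otimes> (c s \<otimes> f x)" using gh x' y by simp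
  also have "\<dots> = c (of_nat (Suc n) * s) \<otimes> f (a (-s) x' + x)" by (simp add: prod_decomp algebra_simps)
  finally show ?case by blast
qed


lemma lam:
  fixes \<gamma> :: "real \<Rightarrow> 'g"
  assumes gc: "continuous_map euclideanreal T \<gamma>" and gh: "\<And>s t. \<gamma> (s + t) = \<gamma> s \<otimes> \<gamma> t"
    and gH: "\<And>t. \<exists>s x. \<gamma> t = c s \<otimes> f x"
  shows "\<exists>l. \<forall>t. \<exists>x. \<gamma> t = c (l * t) \<otimes> f x"
proof -
  have gcar: "\<gamma> t \<in> carrier G" for t using gc top by (metis continuous_map_def Pi_iff topspace_euclidean UNIV_I)
  have g0: "\<gamma> 0 = \<one>" using gh[of 0 0] gcar[of 0] by simp
  have gneg: "\<gamma> (-t) = inv (\<gamma> t)" for t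
    using gh[of "-t" t] g0 gcar by (metis add.left_inverse inv_equality)
  obtain \<delta> where \<delta>: "\<delta> > 0" "\<And>s. c s = \<one> \<Longrightarrow> \<bar>s\<bar> < \<delta> \<Longrightarrow> s = 0" using disc by blast
  define d where "d = \<delta> / 2"
  have d: "d > 0" "d < \<delta>" using \<delta> d_def by simp_all
  define \<Phi> where "\<Phi> z = c (fst z) \<otimes> f (snd z)" for z :: "real \<times> 'v"
  define K where "K kn = {of_int (fst kn) * d .. of_int (fst kn) * d + d} \<times> cball (0::'v) (real (snd kn))"
    for kn :: "int \<times> nat"
  define C where "C kn = {t. \<gamma> t \<in> \<Phi> ` K kn}" for kn
  have f1: "continuous_map (euclidean::(real\<times>'v) topology) euclideanreal fst"
    by (simp add: continuous_on_fst continuous_on_id)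
  have f2: "continuous_map (euclidean::(real\<times>'v) topology) euclidean snd"
    by (simp add: continuous_on_snd continuous_on_id)
  have \<Phi>c: "continuous_map euclidean T \<Phi>"
  proof -
    have "continuous_map euclidean T (c \<circ> (fst :: real \<times> 'v \<Rightarrow> real))" using continuous_map_compose[OF f1 cc] by simp
    moreover have "continuous_map euclidean T (f \<circ> (snd :: real \<times> 'v \<Rightarrow> 'v))" using continuous_map_compose[OF f2 f_cont] by simp
    ultimately show ?thesis unfolding \<Phi>_def[abs_def] using cmul2 by (simp add: o_def)
  qed
  have compK: "compact (K kn)" for kn by (simp add: K_def compact_Times)
  have closedC: "closed (C kn)" for kn
  proof -
    have "compactin T (\<Phi> ` K kn)" using image_compactin[of euclidean "K kn" T \<Phi>] compK \<Phi>c by simp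
    then have "closedin T (\<Phi> ` K kn)" using compactin_imp_closedin haus by blast
    from closedin_continuous_map_preimage[OF gc this]
    have "closedin euclidean (C kn)" by (simp add: C_def)
    then show ?thesis using closed_closedin by blast
  qed
  have cover: "\<Union>(range C) = UNIV"
  proof -
    have "t \<in> \<Union>(range C)" for t
    proof -
      obtain s x where sx: "\<gamma> t = c s \<otimes> f x" using gH by blast
      define kn where "kn = (floor (s / d), nat (ceiling (norm x)))"
      have h1: "of_int (floor (s / d)) \<le> s / d" "s / d < of_int (floor (s / d)) + 1" by linarith+
      have "of_int (floor (s / d)) * d \<le> s / d * d" using mult_right_mono[OF h1(1), of d] d by simp
      then have a1: "of_int (floor (s / d)) * d \<le> s" using d by simp
      have "s / d * d < (of_int (floor (s / d)) + 1) * d" using mult_strict_right_mono[OF h1(2) d(1)] .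
      then have a2: "s \<le> of_int (floor (s / d)) * d + d" using d by (simp add: algebra_simps)
      note a1 a2
      moreover have "norm x \<le> real (nat (ceiling (norm x)))" by linarith
      ultimately have "(s, x) \<in> K kn" by (simp add: K_def kn_def)
      moreover have "\<gamma> t = \<Phi> (s, x)" by (simp add: \<Phi>_def sx)
      ultimately have "t \<in> C kn" unfolding C_def by blast
      then show ?thesis by blast
    qed
    then show ?thesis by blast
  qed
  have "\<exists>kn. interior (C kn) \<noteq> {}"
  proof (rule ccontr)
    assume "\<not> ?thesis"
    then have e: "interior (C kn) = {}" for kn by blast
    have "euclideanreal interior_of \<Union>(range C) = {}"
    proof (rule Baire_category_alt)
      show "completely_metrizable_space euclideanreal \<or> locally_compact_space euclideanreal \<and> regular_space euclideanreal"
        using completely_metrizable_space_euclidean by blast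
      show "countable (range C)" by simp
      fix S assume "S \<in> range C"
      then obtain kn where S: "S = C kn" by blast
      have "closedin euclidean S" using closedC S closed_closedin by blast
      moreover have "euclideanreal interior_of S = {}" using e S by simp
      ultimately show "closedin euclideanreal S \<and> euclideanreal interior_of S = {}" by blast
    qed
    then show False using cover by simp
  qed
  then obtain kn t0 where "t0 \<in> interior (C kn)" by blast
  then obtain \<epsilon> where \<epsilon>: "\<epsilon> > 0" "ball t0 \<epsilon> \<subseteq> C kn" using mem_interior by blast
  have inj: "inj_on \<Phi> (K kn)"
  proof (rule inj_onI)
    fix z z' assume z: "z \<in> K kn" "z' \<in> K kn" "\<Phi> z = \<Phi> z'"
    then have "c (fst z) = c (fst z') \<and> snd z = snd z'" using decomp unfolding \<Phi>_def by blast
    then have e1: "c (fst z - fst z') = \<one>" and e2: "snd z = snd z'" using c_eq_diff by blast+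
    have "\<bar>fst z - fst z'\<bar> \<le> d" using z(1,2) by (auto simp: K_def)
    then have "fst z - fst z' = 0" using \<delta>(2)[OF e1] d by linarith
    then show "z = z'" using e2 by (simp add: prod_eq_iff)
  qed
  define g where "g = inv_into (K kn) \<Phi>"
  have gcont: "continuous_map (subtopology T (\<Phi> ` K kn)) (top_of_set (K kn)) g"
  proof (rule continuous_inverse_map)
    show "compact_space (top_of_set (K kn))" using compK by (simp add: compact_space_subtopology)
    show "Hausdorff_space T" by (rule haus)
    show "continuous_map (top_of_set (K kn)) T \<Phi>" by (rule continuous_map_from_subtopology[OF \<Phi>c])
    show "g (\<Phi> x) = x" if "x \<in> topspace (top_of_set (K kn))" for x
      using that inj by (simp add: g_def)
    show "\<Phi> ` K kn \<subseteq> \<Phi> ` topspace (top_of_set (K kn))" by simp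
  qed
  define \<sigma> where "\<sigma> t = fst (g (\<gamma> t))" for t
  have \<sigma>cont: "continuous_on (ball t0 \<epsilon>) \<sigma>"
  proof -
    have "continuous_map (top_of_set (ball t0 \<epsilon>)) (subtopology T (\<Phi> ` K kn)) \<gamma>"
      by (rule continuous_map_into_subtopology[OF continuous_map_from_subtopology[OF gc]])
         (use \<epsilon> in \<open>auto simp: C_def\<close>)
    from continuous_map_compose[OF continuous_map_compose[OF this gcont] continuous_map_from_subtopology[OF f1]]
    have "continuous_map (top_of_set (ball t0 \<epsilon>)) euclideanreal \<sigma>" by (simp add: o_def \<sigma>_def[abs_def])
    then show ?thesis by simp
  qed
  have \<sigma>dec: "\<exists>x. \<gamma> t = c (\<sigma> t) \<otimes> f x" if "t \<in> ball t0 \<epsilon>" for t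
  proof -
    have "\<gamma> t \<in> \<Phi> ` K kn" using that \<epsilon> by (auto simp: C_def)
    then have "\<Phi> (g (\<gamma> t)) = \<gamma> t" by (simp add: g_def f_inv_into_f)
    then have "\<gamma> t = c (\<sigma> t) \<otimes> f (snd (g (\<gamma> t)))" by (simp add: \<Phi>_def \<sigma>_def)
    then show ?thesis by blast
  qed
  define \<tau> where "\<tau> h = \<sigma> (t0 + h) - \<sigma> t0" for h
  have \<tau>dec: "\<exists>x. \<gamma> h = c (\<tau> h) \<otimes> f x" if "\<bar>h\<bar> < \<epsilon>" for h
  proof -
    have "t0 + h \<in> ball t0 \<epsilon>" using that by (simp add: dist_real_def)
    then obtain x1 where x1: "\<gamma> (t0 + h) = c (\<sigma> (t0 + h)) \<otimes> f x1"
      using \<sigma>dec by blast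
    obtain x0 where x0: "\<gamma> t0 = c (\<sigma> t0) \<otimes> f x0" using \<sigma>dec[of t0] \<epsilon> by auto
    have "\<gamma> h = \<gamma> ((t0 + h) + (-t0))" by simp
    also have "\<dots> = \<gamma> (t0 + h) \<otimes> \<gamma> (-t0)" by (rule gh)
    also have "\<dots> = (c (\<sigma> (t0 + h)) \<otimes> f x1) \<otimes> inv (c (\<sigma> t0) \<otimes> f x0)"
      by (simp only: x1 gneg x0)
    also have "\<dots> = (c (\<sigma> (t0 + h)) \<otimes> f x1) \<otimes> (c (- \<sigma> t0) \<otimes> f (a (\<sigma> t0) (-x0)))"
      by (simp only: inv_decomp)
    also have "\<dots> = c (\<tau> h) \<otimes> f (a (- (- \<sigma> t0)) x1 + a (\<sigma> t0) (-x0))"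
      by (simp add: prod_decomp \<tau>_def)
    finally show ?thesis by blast
  qed
  have \<tau>cont: "continuous_on (ball 0 \<epsilon>) \<tau>"
  proof -
    have "continuous_on (ball 0 \<epsilon>) (\<lambda>h. t0 + h)" by (intro continuous_intros)
    moreover have "(\<lambda>h. t0 + h) ` ball 0 \<epsilon> \<subseteq> ball t0 \<epsilon>" by (auto simp: dist_real_def)
    ultimately have "continuous_on (ball 0 \<epsilon>) (\<lambda>h. \<sigma> (t0 + h))"
      using continuous_on_compose2[OF \<sigma>cont] by blast
    then show ?thesis unfolding \<tau>_def[abs_def] by (intro continuous_intros)
  qed
  have \<tau>0: "\<tau> 0 = 0" by (simp add: \<tau>_def)
  obtain dd where dd: "dd > 0" "\<And>h. h \<in> ball 0 \<epsilon> \<Longrightarrow> dist h 0 < dd \<Longrightarrow> dist (\<tau> h) (\<tau> 0) < \<delta> / 3"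
    using \<tau>cont \<epsilon>(1) \<delta>(1) unfolding continuous_on_iff by (metis centre_in_ball divide_pos_pos zero_less_numeral)
  define e where "e = min dd \<epsilon>"
  have e: "e > 0" "e \<le> \<epsilon>" using dd \<epsilon> by (simp_all add: e_def)
  have small: "\<bar>\<tau> h\<bar> < \<delta> / 3" if "\<bar>h\<bar> < e" for h
    using dd(2)[of h] that \<tau>0 by (simp add: e_def dist_real_def)
  have ladd: "\<tau> (h + k) = \<tau> h + \<tau> k" if hk: "\<bar>h\<bar> < e / 2" "\<bar>k\<bar> < e / 2" for h k
  proof -
    obtain x where x: "\<gamma> h = c (\<tau> h) \<otimes> f x" using \<tau>dec[of h] hk e by auto
    obtain y where y: "\<gamma> k = c (\<tau> k) \<otimes> f y" using \<tau>dec[of k] hk e by auto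
    have "\<bar>h + k\<bar> < \<epsilon>" using hk e by linarith
    then obtain z where z: "\<gamma> (h + k) = c (\<tau> (h + k)) \<otimes> f z" using \<tau>dec by blast
    have "\<gamma> (h + k) = c (\<tau> h + \<tau> k) \<otimes> f (a (- \<tau> k) x + y)" using gh x y prod_decomp by simp
    then have "c (\<tau> (h + k)) = c (\<tau> h + \<tau> k)" using z decomp by metis
    then have c1: "c (\<tau> (h + k) - (\<tau> h + \<tau> k)) = \<one>" by (rule c_eq_diff)
    have "\<bar>\<tau> (h + k)\<bar> < \<delta> / 3" "\<bar>\<tau> h\<bar> < \<delta> / 3" "\<bar>\<tau> k\<bar> < \<delta> / 3"
      using small hk by auto
    then have "\<bar>\<tau> (h + k) - (\<tau> h + \<tau> k)\<bar> < \<delta>" by linarith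
    then show ?thesis using \<delta>(2)[OF c1] by simp
  qed
  have cont2: "continuous_on (ball 0 (e / 2)) \<tau>"
    using continuous_on_subset[OF \<tau>cont] e by (auto simp: subset_eq)
  obtain \<Gamma> where \<Gamma>: "\<And>x y. \<Gamma> (x + y) = \<Gamma> x + \<Gamma> y" "continuous_on UNIV \<Gamma>"
    "\<And>t. \<exists>N::nat. N > 0 \<and> \<bar>t / real N\<bar> < e / 2 \<and> \<Gamma> t = real N * \<tau> (t / real N)"
    using local_cauchy[of "e / 2" \<tau>] e ladd cont2 by auto
  have lin: "linear \<Gamma>" by (rule cauchy_linear[of \<Gamma>, OF \<Gamma>(1) \<Gamma>(2)])
  have Gt: "\<Gamma> t = \<Gamma> 1 * t" for t
    using linear_scale[OF lin, of t 1] by simp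
  have "\<exists>x. \<gamma> t = c (\<Gamma> 1 * t) \<otimes> f x" for t
  proof -
    obtain N :: nat where N: "N > 0" "\<bar>t / real N\<bar> < e / 2" "\<Gamma> t = real N * \<tau> (t / real N)"
      using \<Gamma>(3) by blast
    have "\<bar>t / real N\<bar> < \<epsilon>" using N(2) e by linarith
    then obtain x where x: "\<gamma> (t / real N) = c (\<tau> (t / real N)) \<otimes> f x" using \<tau>dec by blast
    from M_nat[OF gh x gcar, of N]
    obtain x' where "\<gamma> (real N * (t / real N)) = c (real N * \<tau> (t / real N)) \<otimes> f x'" by blast
    then have "\<gamma> t = c (\<Gamma> t) \<otimes> f x'" using N by simp
    then show ?thesis using Gt by metis
  qed
  then show ?thesis by blast
qed

end

context LS begin

lemma a_diff: "a s (x - y) = a s x - a s y"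
  by (rule linear_diff[OF a_lin])

lemma a_scale: "a s (r *\<^sub>R x) = r *\<^sub>R a s x"
  by (rule linear_scale[OF a_lin])

lemma solve:
  assumes inj0: "\<And>x. a s x = x \<Longrightarrow> x = 0"
  shows "\<exists>w. a s w - w = z" and "a s w - w = a s w' - w' \<Longrightarrow> w = w'"
proof -
  define B where "B x = a s x - x" for x
  have linB: "linear B" unfolding B_def[abs_def]
    by (rule linearI) (simp_all add: a_add a_scale algebra_simps)
  have injB: "inj B"
  proof (rule injI)
    fix x y assume "B x = B y"
    then have "a s (x - y) = x - y" unfolding B_def by (simp add: a_diff algebra_simps)
    then have "x - y = 0" by (rule inj0)
    then show "x = y" by simp
  qed
  then have "surj B" using linear_injective_imp_surjective[OF linB] by blast
  then obtain w0 where "z = B w0" by (metis surjD)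
  then show "\<exists>w. a s w - w = z" unfolding B_def by blast
  show "a s w - w = a s w' - w' \<Longrightarrow> w = w'" using injD[OF injB, of w w'] unfolding B_def by blast
qed

lemma set_mult_cV: "y \<in> range c <#> V \<longleftrightarrow> (\<exists>s x. y = c s \<otimes> f x)"
proof
  assume "y \<in> range c <#> V"
  then obtain s k where "k \<in> V" "y = c s \<otimes> k" unfolding set_mult_def by blast
  then show "\<exists>s x. y = c s \<otimes> f x" using f_finv by metis
next
  assume "\<exists>s x. y = c s \<otimes> f x"
  then show "y \<in> range c <#> V" unfolding set_mult_def using fV by blast
qed

lemma conj_opg:
  assumes w: "w \<in> V"
  shows "one_param_subgroup G T ((\<lambda>q. w \<otimes> q \<otimes> inv w) ` range c)"
    and "(\<lambda>q. w \<otimes> q \<otimes> inv w) ` range c \<subseteq> range c <#> V"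
proof -
  have wc: "w \<in> carrier G" using w Vcarr by blast
  define \<gamma> where "\<gamma> r = w \<otimes> c r \<otimes> inv w" for r
  have "continuous_map euclideanreal T (\<lambda>r. w \<otimes> c r)" by (rule cmul2[OF const_cont[OF wc] cc])
  then have "continuous_map euclideanreal T (\<lambda>r. w \<otimes> c r \<otimes> inv w)"
    by (rule cmul2[OF _ const_cont]) (simp add: wc)
  then have "continuous_map euclideanreal T \<gamma>" unfolding \<gamma>_def[abs_def] .
  moreover have "\<gamma> (s + t) = \<gamma> s \<otimes> \<gamma> t" for s t
    unfolding \<gamma>_def using conj_mult[OF wc c_carr c_carr] chom by simp
  moreover have "(\<lambda>q. w \<otimes> q \<otimes> inv w) ` range c = range \<gamma>" unfolding \<gamma>_def by auto
  ultimately show "one_param_subgroup G T ((\<lambda>q. w \<otimes> q \<otimes> inv w) ` range c)"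
    unfolding one_param_subgroup_def by blast
  show "(\<lambda>q. w \<otimes> q \<otimes> inv w) ` range c \<subseteq> range c <#> V"
  proof
    fix y assume "y \<in> (\<lambda>q. w \<otimes> q \<otimes> inv w) ` range c"
    then obtain r where y: "y = w \<otimes> c r \<otimes> inv w" by blast
    have "y = c r \<otimes> f (a (-r) (finv w) - finv w)" using y conjP[of "finv w" r] f_finv[OF w] by simp
    then show "y \<in> range c <#> V" using set_mult_cV by blast
  qed
qed

lemma part1:
  assumes Q: "one_param_subgroup G T Q" and QH: "Q \<subseteq> range c <#> V"
  shows "Q \<subseteq> V \<or> (\<exists>w\<in>V. Q = (\<lambda>q. w \<otimes> q \<otimes> inv w) ` range c)"
proof -
  obtain \<gamma> where gc: "continuous_map euclideanreal T \<gamma>" and gh: "\<And>s t. \<gamma> (s + t) = \<gamma> s \<otimes> \<gamma> t"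
    and Qg: "Q = range \<gamma>"
    using Q unfolding one_param_subgroup_def by blast
  have gH: "\<exists>s x. \<gamma> t = c s \<otimes> f x" for t using QH Qg set_mult_cV by blast
  obtain l where l: "\<And>t. \<exists>x. \<gamma> t = c (l * t) \<otimes> f x" using lam[OF gc gh gH] by blast
  define X where "X t = (SOME x. \<gamma> t = c (l * t) \<otimes> f x)" for t
  have X: "\<gamma> t = c (l * t) \<otimes> f (X t)" for t unfolding X_def using l by (rule someI_ex)
  show ?thesis
  proof (cases "l = 0")
    case True
    then have "\<gamma> t \<in> V" for t using X[of t] fV by simp
    then show ?thesis using Qg by blast
  next
    case False
    have coc: "X (t + u) = a (- (l * u)) (X t) + X u" for t u
    proof -
      have "c (l * (t + u)) \<otimes> f (X (t + u)) = \<gamma> (t + u)" by (rule X[symmetric])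
      also have "\<dots> = \<gamma> t \<otimes> \<gamma> u" by (rule gh)
      also have "\<dots> = (c (l * t) \<otimes> f (X t)) \<otimes> (c (l * u) \<otimes> f (X u))" by (simp only: X)
      also have "\<dots> = c (l * (t + u)) \<otimes> f (a (- (l * u)) (X t) + X u)"
        by (simp add: prod_decomp distrib_left)
      finally show ?thesis using decomp by blast
    qed
    have E: "a (- (l * u)) (X t) + X u = a (- (l * t)) (X u) + X t" for t u
      using coc[of t u] coc[of u t] by (simp add: add.commute)
    obtain s0 x0 where "a s0 x0 \<noteq> x0" using ntriv' by blast
    then have inj0: "\<And>x. a s0 x = x \<Longrightarrow> x = 0" using K1[of s0] by blast
    define t0 where "t0 = - s0 / l"
    have t0: "- (l * t0) = s0" using False by (simp add: t0_def)
    obtain w where w: "a s0 w - w = X t0" using solve(1)[OF inj0] by blast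
    have Xu: "X u = a (- (l * u)) w - w" for u
    proof -
      have "a s0 (X u) - X u = a (- (l * u)) (X t0) - X t0"
        using E[of t0 u] t0 by (simp add: algebra_simps)
      also have "\<dots> = a (- (l * u)) (a s0 w - w) - (a s0 w - w)" using w by simp
      also have "\<dots> = a s0 (a (- (l * u)) w - w) - (a (- (l * u)) w - w)"
        by (simp add: a_diff a_commute[of "- (l * u)" s0] algebra_simps)
      finally show ?thesis using solve(2)[OF inj0] by blast
    qed
    have g: "\<gamma> u = f w \<otimes> c (l * u) \<otimes> inv (f w)" for u
      using X[of u] Xu[of u] conjP[of w "l * u"] by simp
    have "range \<gamma> = (\<lambda>q. f w \<otimes> q \<otimes> inv (f w)) ` range c"
    proof -
      have "r \<in> range (\<lambda>u. l * u)" for r using False by (intro image_eqI[of _ _ "r / l"]) auto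
      then have "range (\<lambda>u. l * u) = UNIV" by blast
      note surjl = this
      have "range \<gamma> = (\<lambda>u. f w \<otimes> c (l * u) \<otimes> inv (f w)) ` UNIV" using g by auto
      also have "\<dots> = (\<lambda>r. f w \<otimes> c r \<otimes> inv (f w)) ` range (\<lambda>u. l * u)"
        by (simp only: image_image)
      also have "\<dots> = (\<lambda>r. f w \<otimes> c r \<otimes> inv (f w)) ` UNIV" by (simp only: surjl)
      also have "\<dots> = (\<lambda>q. f w \<otimes> q \<otimes> inv (f w)) ` range c" by (simp only: image_image)
      finally show ?thesis .
    qed
    then show ?thesis using Qg fV by blast
  qed
qed

end

context LS begin

lemma a_ceq: "c r = c s \<Longrightarrow> a (-r) x = a (-s) x"
  unfolding a_def by (simp add: c_neg)

lemma in_conj: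
  assumes w: "w' \<in> V" and m: "c s0 \<otimes> f x \<in> (\<lambda>q. w' \<otimes> q \<otimes> inv w') ` range c"
  shows "x = a (-s0) (finv w') - finv w'"
proof -
  obtain r where r: "c s0 \<otimes> f x = w' \<otimes> c r \<otimes> inv w'" using m by blast
  also have "\<dots> = c r \<otimes> f (a (-r) (finv w') - finv w')"
    using conjP[of "finv w'" r] f_finv[OF w] by simp
  finally have "c s0 = c r \<and> x = a (-r) (finv w') - finv w'" by (rule decomp)
  then show ?thesis using a_ceq[of r s0] by simp
qed

lemma notV: "c s0 \<noteq> \<one> \<Longrightarrow> c s0 \<otimes> f x \<notin> V"
proof
  assume ne: "c s0 \<noteq> \<one>" and m: "c s0 \<otimes> f x \<in> V"
  have "(c s0 \<otimes> f x) \<otimes> inv (f x) \<in> V"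
    using m fV Vsub by (simp add: subgroup.m_closed subgroup.m_inv_closed)
  then have "c s0 \<in> V" by (simp add: m_assoc)
  then show False using PV ne by blast
qed

end

theorem proposition2p1:
  fixes G (structure)
    and T :: "'g topology"
    and A :: "('g set \<times> ('g \<Rightarrow> 'e::euclidean_space)) set"
    and V :: "'g set" and f :: "'v::euclidean_space \<Rightarrow> 'g"
    and P :: "'g set" and p :: 'g
  assumes lie: "lie_group G T A"
    and conn: "connected_space T"
    and vec: "vector_subgroup_param G T V f"
    and P1: "one_param_subgroup G T P"
    and normalizes: "\<forall>q\<in>P. \<forall>v\<in>V. q \<otimes> v \<otimes> inv q \<in> V"
    and irreducible: "\<forall>S. subspace S \<and> (\<forall>q\<in>P. \<forall>x\<in>S. inv_into UNIV f (q \<otimes> f x \<otimes> inv q) \<in> S)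
                        \<longrightarrow> S = {0} \<or> S = UNIV"
    and nontrivial: "\<exists>q\<in>P. \<exists>v\<in>V. q \<otimes> v \<otimes> inv q \<noteq> v"
    and pP: "p \<in> P" and p_ne: "p \<noteq> \<one>"
  shows "(\<forall>Q. one_param_subgroup G T Q \<and> Q \<subseteq> P <#> V \<longrightarrow>
             Q \<subseteq> V \<or> (\<exists>w\<in>V. Q = (\<lambda>q. w \<otimes> q \<otimes> inv w) ` P))
       \<and> ((\<exists>v\<in>V. p \<otimes> v \<otimes> inv p \<noteq> v) \<longrightarrow>
             (\<forall>v\<in>V. \<exists>!Q. one_param_subgroup G T Q \<and> Q \<subseteq> P <#> V \<and> p \<otimes> v \<in> Q))
       \<and> ((\<forall>v\<in>V. p \<otimes> v \<otimes> inv p = v) \<longrightarrow>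
             (\<forall>v\<in>V. v \<noteq> \<one> \<longrightarrow> \<not> (\<exists>Q. one_param_subgroup G T Q \<and> Q \<subseteq> P <#> V \<and> p \<otimes> v \<in> Q)))"
proof -
  have grp: "group G" and top: "topspace T = carrier G" and haus: "Hausdorff_space T"
    and cmul: "continuous_map (prod_topology T T) T (\<lambda>(x, y). x \<otimes> y)"
    and cinv: "continuous_map T T (\<lambda>x. inv x)"
    using lie unfolding lie_group_def smooth_map_def by auto
  obtain c where cc: "continuous_map euclideanreal T c" and chom: "\<And>s t. c (s + t) = c s \<otimes> c t"
    and Pc: "P = range c"
    using P1 unfolding one_param_subgroup_def by blast
  interpret L: LS G T V f c
  proof (rule LS.intro[OF grp], rule LS_axioms.intro)
  qed (use top haus cmul cinv vec cc chom normalizes irreducible nontrivial Pc in auto)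
  obtain s0 where p: "p = c s0" using pP Pc by blast
  have p1: "c s0 \<noteq> \<one>" using p_ne p by simp
  have I: "\<forall>Q. one_param_subgroup G T Q \<and> Q \<subseteq> P <#> V \<longrightarrow>
             Q \<subseteq> V \<or> (\<exists>w\<in>V. Q = (\<lambda>q. w \<otimes> q \<otimes> inv w) ` P)"
    using L.part1 Pc by blast
  have II: "(\<exists>v\<in>V. p \<otimes> v \<otimes> inv p \<noteq> v) \<longrightarrow>
             (\<forall>v\<in>V. \<exists>!Q. one_param_subgroup G T Q \<and> Q \<subseteq> P <#> V \<and> p \<otimes> v \<in> Q)"
  proof (intro impI ballI)
    assume "\<exists>v\<in>V. p \<otimes> v \<otimes> inv p \<noteq> v"
    then obtain v0 where v0: "v0 \<in> V" "c s0 \<otimes> v0 \<otimes> inv (c s0) \<noteq> v0" using p by blast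
    then have "L.a s0 (L.finv v0) \<noteq> L.finv v0" using L.f_a L.f_finv by metis
    then have inj0: "\<And>x. L.a s0 x = x \<Longrightarrow> x = 0" using L.K1[of s0] by blast
    have inj1: "y = 0" if "L.a (-s0) y = y" for y
    proof -
      have "L.a s0 y = y" using L.a_neg2[of s0 y] that by simp
      then show ?thesis by (rule inj0)
    qed
    fix v assume v: "v \<in> V"
    obtain w where w: "L.a (-s0) w - w = L.finv v" using L.solve(1)[OF inj1] by blast
    define Q where "Q = (\<lambda>q. f w \<otimes> q \<otimes> inv (f w)) ` P"
    have Q1: "one_param_subgroup G T Q" and Q2: "Q \<subseteq> P <#> V"
      using L.conj_opg[OF L.fV[of w]] Pc Q_def by auto
    have "p \<otimes> v = c s0 \<otimes> f (L.finv v)" using p L.f_finv[OF v] by simp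
    also have "\<dots> = f w \<otimes> c s0 \<otimes> inv (f w)" using w L.conjP[of w s0] by simp
    finally have Q3: "p \<otimes> v \<in> Q" using Q_def Pc by blast
    show "\<exists>!Q. one_param_subgroup G T Q \<and> Q \<subseteq> P <#> V \<and> p \<otimes> v \<in> Q"
    proof (rule ex1I[of _ Q])
      show "one_param_subgroup G T Q \<and> Q \<subseteq> P <#> V \<and> p \<otimes> v \<in> Q" using Q1 Q2 Q3 by blast
      fix Q' assume Q': "one_param_subgroup G T Q' \<and> Q' \<subseteq> P <#> V \<and> p \<otimes> v \<in> Q'"
      have pv: "p \<otimes> v = c s0 \<otimes> f (L.finv v)" using p L.f_finv[OF v] by simp
      from I Q' have "Q' \<subseteq> V \<or> (\<exists>w\<in>V. Q' = (\<lambda>q. w \<otimes> q \<otimes> inv w) ` P)" by blast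
      then show "Q' = Q"
      proof
        assume "Q' \<subseteq> V"
        then show ?thesis using Q' pv L.notV[OF p1] by auto
      next
        assume "\<exists>w\<in>V. Q' = (\<lambda>q. w \<otimes> q \<otimes> inv w) ` P"
        then obtain w' where w': "w' \<in> V" "Q' = (\<lambda>q. w' \<otimes> q \<otimes> inv w') ` P" by blast
        have "L.finv v = L.a (-s0) (L.finv w') - L.finv w'"
          using L.in_conj[OF w'(1)] Q' w' pv Pc by auto
        then have "L.finv w' = w" using L.solve(2)[OF inj1] w by metis
        then have "w' = f w" using L.f_finv[OF w'(1)] by simp
        then show ?thesis using w' Q_def by simp
      qed
    qed
  qed
  have III: "(\<forall>v\<in>V. p \<otimes> v \<otimes> inv p = v) \<longrightarrow>
             (\<forall>v\<in>V. v \<noteq> \<one> \<longrightarrow> \<not> (\<exists>Q. one_param_subgroup G T Q \<and> Q \<subseteq> P <#> V \<and> p \<otimes> v \<in> Q))"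
  proof (intro impI ballI notI)
    assume triv: "\<forall>v\<in>V. p \<otimes> v \<otimes> inv p = v"
    have at: "L.a s0 x = x" for x
    proof -
      have "f (L.a s0 x) = f x" using triv L.f_a L.fV p by simp
      then show ?thesis by (simp add: L.f_eq)
    qed
    have at2: "L.a (-s0) x = x" for x using L.a_neg[of s0 x] at[of x] by simp
    fix v assume v: "v \<in> V" and v1: "v \<noteq> \<one>"
    assume "\<exists>Q. one_param_subgroup G T Q \<and> Q \<subseteq> P <#> V \<and> p \<otimes> v \<in> Q"
    then obtain Q' where Q': "one_param_subgroup G T Q'" "Q' \<subseteq> P <#> V" "p \<otimes> v \<in> Q'" by blast
    have pv: "p \<otimes> v = c s0 \<otimes> f (L.finv v)" using p L.f_finv[OF v] by simp
    from I Q' have "Q' \<subseteq> V \<or> (\<exists>w\<in>V. Q' = (\<lambda>q. w \<otimes> q \<otimes> inv w) ` P)" by blast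
    then show False
    proof
      assume "Q' \<subseteq> V"
      then show ?thesis using Q' pv L.notV[OF p1] by auto
    next
      assume "\<exists>w\<in>V. Q' = (\<lambda>q. w \<otimes> q \<otimes> inv w) ` P"
      then obtain w' where w': "w' \<in> V" "Q' = (\<lambda>q. w' \<otimes> q \<otimes> inv w') ` P" by blast
      have "L.finv v = L.a (-s0) (L.finv w') - L.finv w'"
        using L.in_conj[OF w'(1)] Q' w' pv Pc by auto
      then have "L.finv v = 0" using at2 by simp
      then have "v = \<one>" using L.f_finv[OF v] by (metis L.f0)
      then show False using v1 by simp
    qed
  qed
  show ?thesis using I II III by blast
qed

end
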